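(* For any positive integer $k$, $dim_s(C_{2k+1}\times C_{2k+1})=(2k+1)(k+1)$.
   Context: $C_n$ is the cycle on $n$ vertices. The direct product $G\times H$ has vertex set $V(G)\times V(H)$, with $(a,b)$ adjacent to $(c,d)$ iff $ac\in E(G)$ and $bd\in E(H)$. For a connected graph $G$, $I_G[u,v]$ is the set of vertices lying on some shortest $u$–$v$ path; a vertex $w$ strongly resolves $u,v$ if $v\in I_G[u,w]$ or $u\in I_G[v,w]$; a strong resolving set is a set $S\subseteq V(G)$ such that every pair of vertices is strongly resolved by some vertex of $S$; $dim_s(G)$ is the minimum cardinality of a strong resolving set. *)

theory Defs
  imports Main
begin

definition is_walk :: "'a set \<Rightarrow> ('a \<Rightarrow> 'a \<Rightarrow> bool) \<Rightarrow> (nat \<Rightarrow> 'a) \<Rightarrow> nat \<Rightarrow> 'a \<Rightarrow> 'a \<Rightarrow> bool" where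
  "is_walk V E p k u v \<longleftrightarrow> p 0 = u \<and> p k = v \<and> (\<forall>i\<le>k. p i \<in> V) \<and> (\<forall>i<k. E (p i) (p (Suc i)))"

definition gdist :: "'a set \<Rightarrow> ('a \<Rightarrow> 'a \<Rightarrow> bool) \<Rightarrow> 'a \<Rightarrow> 'a \<Rightarrow> nat" where
  "gdist V E u v = (LEAST k. \<exists>p. is_walk V E p k u v)"

definition interval :: "'a set \<Rightarrow> ('a \<Rightarrow> 'a \<Rightarrow> bool) \<Rightarrow> 'a \<Rightarrow> 'a \<Rightarrow> 'a set" where
  "interval V E u v = {w. \<exists>p. is_walk V E p (gdist V E u v) u v \<and> (\<exists>i\<le>gdist V E u v. p i = w)}"

definition strongly_resolves :: "'a set \<Rightarrow> ('a \<Rightarrow> 'a \<Rightarrow> bool) \<Rightarrow> 'a \<Rightarrow> 'a \<Rightarrow> 'a \<Rightarrow> bool" where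
  "strongly_resolves V E w u v \<longleftrightarrow> v \<in> interval V E u w \<or> u \<in> interval V E v w"

definition strong_resolving_set :: "'a set \<Rightarrow> ('a \<Rightarrow> 'a \<Rightarrow> bool) \<Rightarrow> 'a set \<Rightarrow> bool" where
  "strong_resolving_set V E S \<longleftrightarrow> S \<subseteq> V \<and>
     (\<forall>u\<in>V. \<forall>v\<in>V. u \<noteq> v \<longrightarrow> (\<exists>w\<in>S. strongly_resolves V E w u v))"

definition strong_metric_dim :: "'a set \<Rightarrow> ('a \<Rightarrow> 'a \<Rightarrow> bool) \<Rightarrow> nat" where
  "strong_metric_dim V E = (LEAST n. \<exists>S. strong_resolving_set V E S \<and> card S = n)"

definition cycle_V :: "nat \<Rightarrow> nat set" where
  "cycle_V n = {0..<n}"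

definition cycle_E :: "nat \<Rightarrow> nat \<Rightarrow> nat \<Rightarrow> bool" where
  "cycle_E n a b \<longleftrightarrow> a < n \<and> b < n \<and> (b = (a + 1) mod n \<or> a = (b + 1) mod n)"

definition dprod_V :: "'a set \<Rightarrow> 'b set \<Rightarrow> ('a \<times> 'b) set" where
  "dprod_V V1 V2 = V1 \<times> V2"

definition dprod_E :: "('a \<Rightarrow> 'a \<Rightarrow> bool) \<Rightarrow> ('b \<Rightarrow> 'b \<Rightarrow> bool) \<Rightarrow> ('a \<times> 'b) \<Rightarrow> ('a \<times> 'b) \<Rightarrow> bool" where
  "dprod_E E1 E2 x y \<longleftrightarrow> E1 (fst x) (fst y) \<and> E2 (snd x) (snd y)"

end

theory Submission
  imports Defs
begin

section \<open>Arithmetic on cycle offsets\<close>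

definition Rw :: "nat \<Rightarrow> nat \<Rightarrow> nat \<Rightarrow> bool" where
 "Rw n m r \<longleftrightarrow> (r \<le> m \<and> even (m + r)) \<or> (n \<le> m + r \<and> even (m + r + n))"
definition inc :: "nat \<Rightarrow> nat \<Rightarrow> nat" where "inc n x = (if x + 1 = n then 0 else x + 1)"
definition dec :: "nat \<Rightarrow> nat \<Rightarrow> nat" where "dec n x = (if x = 0 then n - 1 else x - 1)"
definition diffn :: "nat \<Rightarrow> nat \<Rightarrow> nat \<Rightarrow> nat" where
 "diffn n a c = (if a \<le> c then c - a else c + n - a)"
definition Dn :: "nat \<Rightarrow> nat \<Rightarrow> nat \<Rightarrow> nat" where
 "Dn n r1 r2 = (let d1 = min r1 (n - r1); d2 = min r2 (n - r2) in
    if even (d1 + d2) then max d1 d2 else n - max d1 d2)"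
definition dl :: "nat \<Rightarrow> nat \<Rightarrow> nat" where "dl n r = min r (n - r)"
definition DD :: "nat \<Rightarrow> nat \<Rightarrow> nat \<Rightarrow> nat" where
 "DD n d1 d2 = (if even (d1 + d2) then max d1 d2 else n - max d1 d2)"

lemma Dn_DD: "Dn n r1 r2 = DD n (dl n r1) (dl n r2)"
  unfolding Dn_def DD_def dl_def Let_def by simp
lemma dl_le: "n = 2*k+1 \<Longrightarrow> dl n r \<le> k"
  unfolding dl_def by auto

lemma R1: "r < n \<Longrightarrow> Rw n m r \<Longrightarrow> Rw n (Suc m) (inc n r)"
  unfolding Rw_def inc_def by (auto split: if_splits)
lemma R1': "r < n \<Longrightarrow> Rw n m (inc n r) \<Longrightarrow> Rw n (Suc m) r"
  unfolding Rw_def inc_def by (auto split: if_splits)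
lemma R2: "r < n \<Longrightarrow> 2 \<le> n \<Longrightarrow> Rw n (Suc m) r \<Longrightarrow> Rw n m (dec n r) \<or> Rw n m (inc n r)"
  unfolding Rw_def inc_def dec_def by (auto split: if_splits) presburger+
lemma Dn1: "n = 2*k+1 \<Longrightarrow> r1 < n \<Longrightarrow> r2 < n \<Longrightarrow> Rw n (Dn n r1 r2) r1 \<and> Rw n (Dn n r1 r2) r2"
  unfolding Rw_def Dn_def Let_def min_def max_def by (auto split: if_splits)
lemma Dn2: "n = 2*k+1 \<Longrightarrow> r1 < n \<Longrightarrow> r2 < n \<Longrightarrow> m < Dn n r1 r2 \<Longrightarrow> \<not> (Rw n m r1 \<and> Rw n m r2)"
  unfolding Rw_def Dn_def Let_def min_def max_def by (auto split: if_splits)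
lemma Dn_le: "n = 2*k+1 \<Longrightarrow> r1 < n \<Longrightarrow> r2 < n \<Longrightarrow> Dn n r1 r2 \<le> 2*k"
  unfolding Dn_def Let_def min_def max_def by (auto split: if_splits) presburger+
lemma Dn01: "n = 2*k+1 \<Longrightarrow> 0 < k \<Longrightarrow> Dn n 0 1 = 2*k \<and> Dn n 0 (n - 1) = 2*k"
  unfolding Dn_def Let_def min_def max_def by (auto split: if_splits)

lemma up_ex: "n = 2*k+1 \<Longrightarrow> 0 < k \<Longrightarrow> r < n \<Longrightarrow> dl n (inc n r) = (if dl n r < k then dl n r + 1 else k) \<or> dl n (dec n r) = (if dl n r < k then dl n r + 1 else k)"
  unfolding dl_def inc_def dec_def min_def by (cases "r < k"; cases "r = k"; cases "r = k+1"; simp) arith+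
lemma down_ex: "n = 2*k+1 \<Longrightarrow> 0 < k \<Longrightarrow> r < n \<Longrightarrow> dl n (inc n r) = (if dl n r = 0 then 1 else dl n r - 1) \<or> dl n (dec n r) = (if dl n r = 0 then 1 else dl n r - 1)"
  unfolding dl_def inc_def dec_def min_def by (cases "r = 0"; cases "r \<le> k"; cases "r + 1 = n"; simp) arith+

definition upd :: "nat \<Rightarrow> nat \<Rightarrow> nat" where "upd k d = (if d < k then d + 1 else k)"
definition dnd :: "nat \<Rightarrow> nat" where "dnd d = (if d = 0 then 1 else d - 1)"
lemma locmaxD: 
  assumes n: "n = 2*k+1" and k: "0 < k" and d: "d1 \<le> k" "d2 \<le> k"
    and nu: "\<not> ((d1 = 0 \<and> d2 = 1) \<or> (d2 = 0 \<and> d1 = 1))"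
  shows "DD n d1 d2 < DD n (upd k d1) (upd k d2) \<or> DD n d1 d2 < DD n (upd k d1) (dnd d2) \<or>
         DD n d1 d2 < DD n (dnd d1) (upd k d2) \<or> DD n d1 d2 < DD n (dnd d1) (dnd d2)"
proof (cases "even (d1 + d2)")
  case ev: True
  then have D0: "DD n d1 d2 = max d1 d2" unfolding DD_def by simp
  show ?thesis
  proof (cases "d1 < k \<and> d2 < k")
    case True
    then have "upd k d1 = d1 + 1" "upd k d2 = d2 + 1" unfolding upd_def by auto
    moreover have "even (d1 + 1 + (d2 + 1))" using ev by simp
    ultimately have "DD n (upd k d1) (upd k d2) = max d1 d2 + 1" unfolding DD_def by simp
    then show ?thesis using D0 by simp
  next
    case False
    then consider "d1 = k" | "d2 = k" using d by linarith
    then show ?thesis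
    proof cases
      case 1
      then have u: "upd k d1 = k" unfolding upd_def by simp
      have "odd (k + dnd d2)" using ev 1 unfolding dnd_def by (cases "d2 = 0") auto
      then have "DD n (upd k d1) (dnd d2) = n - max k (dnd d2)" unfolding DD_def u by simp
      also have "max k (dnd d2) = k" using d k unfolding dnd_def by auto
      finally have "DD n (upd k d1) (dnd d2) = k + 1" using n by simp
      moreover have "max d1 d2 \<le> k" using d by simp
      ultimately show ?thesis using D0 by simp
    next
      case 2
      then have u: "upd k d2 = k" unfolding upd_def by simp
      have "odd (dnd d1 + k)" using ev 2 unfolding dnd_def by (cases "d1 = 0") auto
      then have "DD n (dnd d1) (upd k d2) = n - max (dnd d1) k" unfolding DD_def u by simp
      also have "max (dnd d1) k = k" using d k unfolding dnd_def by auto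
      finally have "DD n (dnd d1) (upd k d2) = k + 1" using n by simp
      moreover have "max d1 d2 \<le> k" using d by simp
      ultimately show ?thesis using D0 by simp
    qed
  qed
next
  case od: False
  then have D0: "DD n d1 d2 = n - max d1 d2" unfolding DD_def by simp
  have mx: "max d1 d2 \<le> k" using d by simp
  consider "0 < d1 \<and> 0 < d2" | "d2 = 0" | "d1 = 0" by linarith
  then show ?thesis
  proof cases
    case 1
    then have u: "dnd d1 = d1 - 1" "dnd d2 = d2 - 1" unfolding dnd_def by auto
    have p: "odd (d1 - 1 + (d2 - 1))" using od 1 by presburger
    have "DD n (dnd d1) (dnd d2) = n - max (d1 - 1) (d2 - 1)" unfolding DD_def u by (rule if_not_P[OF p])
    moreover have "max (d1 - 1) (d2 - 1) = max d1 d2 - 1" using 1 by auto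
    ultimately have e: "DD n (dnd d1) (dnd d2) = n - (max d1 d2 - 1)" by simp
    have "1 \<le> max d1 d2" using 1 by auto
    then have "n - max d1 d2 < n - (max d1 d2 - 1)" using mx n by arith
    then have "DD n d1 d2 < DD n (dnd d1) (dnd d2)" unfolding D0 e .
    then show ?thesis by blast
  next
    case 2
    then have "odd d1" using od by simp
    then have "d1 \<noteq> 0" by presburger
    then have "2 \<le> d1" using nu 2 by auto
    have u: "dnd d1 = d1 - 1" "dnd d2 = 1" unfolding dnd_def using 2 \<open>d1 \<noteq> 0\<close> by auto
    have "odd (d1 - 1 + 1)" using \<open>odd d1\<close> \<open>2 \<le> d1\<close> by simp
    then have "DD n (dnd d1) (dnd d2) = n - max (d1 - 1) 1" unfolding DD_def u by simp
    moreover have "max (d1 - 1) 1 = d1 - 1" using \<open>2 \<le> d1\<close> by auto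
    ultimately show ?thesis using D0 mx n 2 \<open>2 \<le> d1\<close> by auto
  next
    case 3
    then have "odd d2" using od by simp
    then have "d2 \<noteq> 0" by presburger
    then have "2 \<le> d2" using nu 3 by auto
    have u: "dnd d2 = d2 - 1" "dnd d1 = 1" unfolding dnd_def using 3 \<open>d2 \<noteq> 0\<close> by auto
    have "odd (1 + (d2 - 1))" using \<open>odd d2\<close> \<open>2 \<le> d2\<close> by simp
    then have "DD n (dnd d1) (dnd d2) = n - max 1 (d2 - 1)" unfolding DD_def u by simp
    moreover have "max 1 (d2 - 1) = d2 - 1" using \<open>2 \<le> d2\<close> by auto
    ultimately show ?thesis using D0 mx n 3 \<open>2 \<le> d2\<close> by auto
  qed
qed

lemma inc_lt: "x < n \<Longrightarrow> inc n x < n" unfolding inc_def by auto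
lemma dec_lt: "x < n \<Longrightarrow> dec n x < n" unfolding dec_def by auto
lemma inc_dec: "x < n \<Longrightarrow> inc n (dec n x) = x" unfolding inc_def dec_def by auto
lemma dec_inc: "x < n \<Longrightarrow> dec n (inc n x) = x" unfolding inc_def dec_def by auto
lemma inc_mod: "x < n \<Longrightarrow> (x + 1) mod n = inc n x" unfolding inc_def by auto
lemma diffn_lt: "a < n \<Longrightarrow> c < n \<Longrightarrow> diffn n a c < n" unfolding diffn_def by auto
lemma diffn_0: "a < n \<Longrightarrow> c < n \<Longrightarrow> diffn n a c = 0 \<longleftrightarrow> a = c" unfolding diffn_def by auto
lemma diffn_self: "diffn n a a = 0" unfolding diffn_def by auto
lemma diffn_inj: "a < n \<Longrightarrow> c < n \<Longrightarrow> c' < n \<Longrightarrow> diffn n a c = diffn n a c' \<Longrightarrow> c = c'"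
  unfolding diffn_def by (auto split: if_splits)
lemma diffn_inc: "a < n \<Longrightarrow> c < n \<Longrightarrow> diffn n a (inc n c) = inc n (diffn n a c)"
  unfolding diffn_def inc_def by auto
lemma diffn_dec: "a < n \<Longrightarrow> c < n \<Longrightarrow> diffn n a (dec n c) = dec n (diffn n a c)"
  unfolding diffn_def dec_def by auto
lemma diffn_inc1: "a < n \<Longrightarrow> c < n \<Longrightarrow> diffn n (inc n a) c = dec n (diffn n a c)"
  unfolding diffn_def inc_def dec_def by auto
lemma diffn_dec1: "a < n \<Longrightarrow> c < n \<Longrightarrow> diffn n (dec n a) c = inc n (diffn n a c)"
  unfolding diffn_def inc_def dec_def by auto
lemma diffn_surj: "a < n \<Longrightarrow> r < n \<Longrightarrow> diffn n a (if a + r < n then a + r else a + r - n) = r"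
  unfolding diffn_def by auto

section \<open>Walks\<close>

definition walkable :: "'a set \<Rightarrow> ('a \<Rightarrow> 'a \<Rightarrow> bool) \<Rightarrow> nat \<Rightarrow> 'a \<Rightarrow> 'a \<Rightarrow> bool" where
  "walkable V E m u v \<longleftrightarrow> (\<exists>p. is_walk V E p m u v)"

lemma gdist_walkable: "gdist V E u v = (LEAST m. walkable V E m u v)"
  by (simp add: gdist_def walkable_def)

lemma walkable_0: "walkable V E 0 u v \<longleftrightarrow> u = v \<and> u \<in> V"
  unfolding walkable_def is_walk_def by auto

lemma walkable_Suc: "walkable V E (Suc m) u w \<longleftrightarrow> (\<exists>v. walkable V E m u v \<and> E v w \<and> w \<in> V)"
proof
  assume "walkable V E (Suc m) u w"
  then obtain p where p: "is_walk V E p (Suc m) u w" unfolding walkable_def by auto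
  then have "is_walk V E p m u (p m)" unfolding is_walk_def by auto
  moreover have "E (p m) w" "w \<in> V" using p unfolding is_walk_def by auto
  ultimately show "\<exists>v. walkable V E m u v \<and> E v w \<and> w \<in> V" unfolding walkable_def by blast
next
  assume "\<exists>v. walkable V E m u v \<and> E v w \<and> w \<in> V"
  then obtain v p where p: "is_walk V E p m u v" and e: "E v w" "w \<in> V" unfolding walkable_def by auto
  have "is_walk V E (p(Suc m := w)) (Suc m) u w"
    using p e unfolding is_walk_def by (auto simp: le_Suc_eq less_Suc_eq)
  then show "walkable V E (Suc m) u w" unfolding walkable_def by blast
qed

lemma walk_concat:
  assumes "is_walk V E p m u v" "is_walk V E q m' v w"
  shows "is_walk V E (\<lambda>i. if i \<le> m then p i else q (i - m)) (m + m') u w"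
  unfolding is_walk_def
proof (intro conjI allI impI)
  show "(if 0 \<le> m then p 0 else q (0 - m)) = u" using assms unfolding is_walk_def by auto
  show "(if m + m' \<le> m then p (m + m') else q (m + m' - m)) = w" using assms unfolding is_walk_def by auto
next
  fix i assume "i \<le> m + m'"
  then show "(if i \<le> m then p i else q (i - m)) \<in> V" using assms unfolding is_walk_def by auto
next
  fix i assume i: "i < m + m'"
  show "E (if i \<le> m then p i else q (i - m)) (if Suc i \<le> m then p (Suc i) else q (Suc i - m))"
  proof (cases "i < m")
    case True then show ?thesis using assms unfolding is_walk_def by auto
  next
    case False
    then have "Suc i - m = Suc (i - m)" by auto
    moreover have "i - m < m'" using i False by auto
    moreover have "(if i \<le> m then p i else q (i - m)) = q (i - m)"
      using False assms unfolding is_walk_def by auto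
    ultimately show ?thesis using assms False unfolding is_walk_def by auto
  qed
qed

lemma walk_prefix: "is_walk V E p K u w \<Longrightarrow> i \<le> K \<Longrightarrow> is_walk V E p i u (p i)"
  unfolding is_walk_def by auto

lemma walkable_concat: "walkable V E m u v \<Longrightarrow> walkable V E m' v w \<Longrightarrow> walkable V E (m + m') u w"
  unfolding walkable_def by (meson walk_concat)

lemma gdist_le_walkable: "walkable V E m u v \<Longrightarrow> gdist V E u v \<le> m"
  unfolding gdist_walkable by (rule Least_le)

lemma far_lemma:
  assumes "y \<in> interval V E x w" "\<forall>w\<in>V. gdist V E x w \<le> B" "B \<le> gdist V E x y"
  shows "y = w"
proof -
  obtain p i where p: "is_walk V E p (gdist V E x w) x w" and i: "i \<le> gdist V E x w" "p i = y"
    using assms(1) unfolding interval_def by auto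
  have "w \<in> V" using p unfolding is_walk_def by auto
  have "is_walk V E p i x y" using walk_prefix[OF p i(1)] i(2) by simp
  then have "gdist V E x y \<le> i" by (intro gdist_le_walkable) (auto simp: walkable_def)
  then have "i = gdist V E x w" using assms(2,3) \<open>w \<in> V\<close> i(1) by force
  then show ?thesis using p i unfolding is_walk_def by auto
qed

lemma walkable_prod:
  "walkable (dprod_V V1 V2) (dprod_E E1 E2) m (a, b) (c, d) \<longleftrightarrow>
   walkable V1 E1 m a c \<and> walkable V2 E2 m b d"
proof (induction m arbitrary: c d)
  case 0
  then show ?case by (auto simp: walkable_0 dprod_V_def)
next
  case (Suc m)
  show ?case
  proof
    assume "walkable (dprod_V V1 V2) (dprod_E E1 E2) (Suc m) (a, b) (c, d)"
    then obtain x y where "walkable (dprod_V V1 V2) (dprod_E E1 E2) m (a, b) (x, y)"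
      "dprod_E E1 E2 (x, y) (c, d)" "(c, d) \<in> dprod_V V1 V2"
      unfolding walkable_Suc by auto
    then show "walkable V1 E1 (Suc m) a c \<and> walkable V2 E2 (Suc m) b d"
      unfolding walkable_Suc Suc.IH by (auto simp: dprod_E_def dprod_V_def)
  next
    assume "walkable V1 E1 (Suc m) a c \<and> walkable V2 E2 (Suc m) b d"
    then obtain x y where "walkable V1 E1 m a x" "E1 x c" "c \<in> V1" "walkable V2 E2 m b y" "E2 y d" "d \<in> V2"
      unfolding walkable_Suc by auto
    moreover have "walkable (dprod_V V1 V2) (dprod_E E1 E2) m (a, b) (x, y)"
      using Suc.IH calculation by simp
    ultimately show "walkable (dprod_V V1 V2) (dprod_E E1 E2) (Suc m) (a, b) (c, d)"
      unfolding walkable_Suc by (intro exI[of _ "(x,y)"]) (auto simp: dprod_E_def dprod_V_def)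
  qed
qed

lemma cycle_E_iff: "cycle_E n x y \<longleftrightarrow> x < n \<and> y < n \<and> (y = inc n x \<or> x = inc n y)"
  unfolding cycle_E_def using inc_mod by auto

lemma walkable_cyc:
  assumes n: "2 \<le> n"
  shows "walkable (cycle_V n) (cycle_E n) m a c \<longleftrightarrow> a < n \<and> c < n \<and> Rw n m (diffn n a c)"
proof (induction m arbitrary: c)
  case 0
  show ?case
  proof
    assume "walkable (cycle_V n) (cycle_E n) 0 a c"
    then show "a < n \<and> c < n \<and> Rw n 0 (diffn n a c)"
      by (auto simp: walkable_0 cycle_V_def Rw_def diffn_self)
  next
    assume h: "a < n \<and> c < n \<and> Rw n 0 (diffn n a c)"
    then have "diffn n a c < n" using diffn_lt by auto
    then have "diffn n a c = 0" using h unfolding Rw_def by auto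
    then show "walkable (cycle_V n) (cycle_E n) 0 a c"
      using h diffn_0 by (auto simp: walkable_0 cycle_V_def)
  qed
next
  case (Suc m)
  show ?case
  proof
    assume "walkable (cycle_V n) (cycle_E n) (Suc m) a c"
    then obtain c' where w: "walkable (cycle_V n) (cycle_E n) m a c'" and e: "cycle_E n c' c"
      unfolding walkable_Suc by auto
    from w have a: "a < n" "c' < n" and R: "Rw n m (diffn n a c')" using Suc.IH by auto
    from e have c: "c < n" and ce: "c = inc n c' \<or> c' = inc n c" unfolding cycle_E_iff by auto
    from ce have "Rw n (Suc m) (diffn n a c)"
    proof
      assume "c = inc n c'"
      then show ?thesis using R1[OF diffn_lt[OF a] R] diffn_inc[OF a] by simp
    next
      assume "c' = inc n c"
      then have "Rw n m (inc n (diffn n a c))" using R diffn_inc[OF a(1) c] by simp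
      then show ?thesis using R1' diffn_lt[OF a(1) c] by blast
    qed
    then show "a < n \<and> c < n \<and> Rw n (Suc m) (diffn n a c)" using a c by simp
  next
    assume h: "a < n \<and> c < n \<and> Rw n (Suc m) (diffn n a c)"
    then have a: "a < n" and c: "c < n" by auto
    from R2[OF diffn_lt[OF a c] n] h
    have "Rw n m (dec n (diffn n a c)) \<or> Rw n m (inc n (diffn n a c))" by simp
    then show "walkable (cycle_V n) (cycle_E n) (Suc m) a c"
    proof
      assume "Rw n m (dec n (diffn n a c))"
      then have "walkable (cycle_V n) (cycle_E n) m a (dec n c)"
        using Suc.IH a c dec_lt diffn_dec by auto
      moreover have "cycle_E n (dec n c) c" unfolding cycle_E_iff using c dec_lt inc_dec by auto
      ultimately show ?thesis unfolding walkable_Suc using c by (auto simp: cycle_V_def)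
    next
      assume "Rw n m (inc n (diffn n a c))"
      then have "walkable (cycle_V n) (cycle_E n) m a (inc n c)"
        using Suc.IH a c inc_lt diffn_inc by auto
      moreover have "cycle_E n (inc n c) c" unfolding cycle_E_iff using c inc_lt by auto
      ultimately show ?thesis unfolding walkable_Suc using c by (auto simp: cycle_V_def)
    qed
  qed
qed

section \<open>The graph C_n x C_n\<close>

abbreviation GV :: "nat \<Rightarrow> (nat \<times> nat) set" where
  "GV n \<equiv> dprod_V (cycle_V n) (cycle_V n)"
abbreviation GE :: "nat \<Rightarrow> nat \<times> nat \<Rightarrow> nat \<times> nat \<Rightarrow> bool" where
  "GE n \<equiv> dprod_E (cycle_E n) (cycle_E n)"

lemma GV_iff: "(a, b) \<in> GV n \<longleftrightarrow> a < n \<and> b < n"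
  by (simp add: dprod_V_def cycle_V_def)

lemma GV_finite: "finite (GV n)"
  by (simp add: dprod_V_def cycle_V_def)

lemma walkable_G:
  assumes "2 \<le> n"
  shows "walkable (GV n) (GE n) m (a, b) (c, d) \<longleftrightarrow>
    a < n \<and> c < n \<and> b < n \<and> d < n \<and> Rw n m (diffn n a c) \<and> Rw n m (diffn n b d)"
  unfolding walkable_prod walkable_cyc[OF assms] by auto

lemma gdist_G:
  assumes n: "n = 2*k+1" and k: "0 < k" and ab: "a < n" "b < n" and cd: "c < n" "d < n"
  shows "gdist (GV n) (GE n) (a, b) (c, d) = Dn n (diffn n a c) (diffn n b d)"
    and "walkable (GV n) (GE n) (gdist (GV n) (GE n) (a, b) (c, d)) (a, b) (c, d)"
proof -
  have n2: "2 \<le> n" using n k by simp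
  have r: "diffn n a c < n" "diffn n b d < n" using diffn_lt ab cd by auto
  show *: "gdist (GV n) (GE n) (a, b) (c, d) = Dn n (diffn n a c) (diffn n b d)"
    unfolding gdist_walkable walkable_G[OF n2]
  proof (rule Least_equality)
    show "a < n \<and> c < n \<and> b < n \<and> d < n \<and> Rw n (Dn n (diffn n a c) (diffn n b d)) (diffn n a c) \<and>
          Rw n (Dn n (diffn n a c) (diffn n b d)) (diffn n b d)"
      using ab cd Dn1[OF n r] by auto
  next
    fix m assume "a < n \<and> c < n \<and> b < n \<and> d < n \<and> Rw n m (diffn n a c) \<and> Rw n m (diffn n b d)"
    then show "Dn n (diffn n a c) (diffn n b d) \<le> m" using Dn2[OF n r] by (meson not_le)
  qed
  show "walkable (GV n) (GE n) (gdist (GV n) (GE n) (a, b) (c, d)) (a, b) (c, d)"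
    unfolding * walkable_G[OF n2] using ab cd Dn1[OF n r] by auto
qed

lemma gdist_G_le:
  assumes n: "n = 2*k+1" and k: "0 < k" and "u \<in> GV n" "v \<in> GV n"
  shows "gdist (GV n) (GE n) u v \<le> 2*k"
proof -
  obtain a b c d where uv: "u = (a, b)" "v = (c, d)" by (cases u, cases v) auto
  then have "a < n" "b < n" "c < n" "d < n" using assms GV_iff by auto
  then show ?thesis using gdist_G(1)[OF n k] Dn_le[OF n] diffn_lt uv by auto
qed

lemma gdist_G_walk:
  assumes n: "n = 2*k+1" and k: "0 < k" and "u \<in> GV n" "v \<in> GV n"
  shows "walkable (GV n) (GE n) (gdist (GV n) (GE n) u v) u v"
proof -
  obtain a b c d where uv: "u = (a, b)" "v = (c, d)" by (cases u, cases v) auto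
  then have "a < n" "b < n" "c < n" "d < n" using assms GV_iff by auto
  then show ?thesis using gdist_G(2)[OF n k] uv by auto
qed

section \<open>Lower bound\<close>

lemma cover_count:
  assumes n: "n = 2*k+1" and T: "T \<subseteq> {..<n}" and cov: "\<forall>j<n. j \<in> T \<or> inc n j \<in> T"
  shows "k + 1 \<le> card T"
proof -
  have fin: "finite T" using T finite_subset by blast
  have "{..<n} \<subseteq> T \<union> dec n ` T"
  proof
    fix j assume "j \<in> {..<n}"
    then have j: "j < n" by simp
    show "j \<in> T \<union> dec n ` T"
    proof (cases "j \<in> T")
      case False
      then have "inc n j \<in> T" using cov j by auto
      moreover have "dec n (inc n j) = j" using dec_inc j by simp
      ultimately show ?thesis by force
    qed simp
  qed
  then have "n \<le> card (T \<union> dec n ` T)"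
    using card_mono[of "T \<union> dec n ` T" "{..<n}"] fin by auto
  also have "\<dots> \<le> card T + card (dec n ` T)" by (rule card_Un_le)
  also have "\<dots> \<le> card T + card T" using card_image_le[OF fin] by simp
  finally show ?thesis using n by simp
qed

lemma lower_bound:
  assumes n: "n = 2*k+1" and k: "0 < k" and S: "strong_resolving_set (GV n) (GE n) S"
  shows "n * (k + 1) \<le> card S"
proof -
  have SV: "S \<subseteq> GV n" using S unfolding strong_resolving_set_def by auto
  have n2: "2 \<le> n" using n k by simp
  have cov: "(a, j) \<in> S \<or> (a, inc n j) \<in> S" if a: "a < n" and j: "j < n" for a j
  proof -
    let ?u = "(a, j)" and ?v = "(a, inc n j)"
    have ij: "inc n j < n" using inc_lt j by simp
    have uV: "?u \<in> GV n" and vV: "?v \<in> GV n" using a j ij GV_iff by auto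
    have "inc n j \<noteq> j" using n2 j unfolding inc_def by auto
    then have "?u \<noteq> ?v" by simp
    then obtain w where w: "w \<in> S" "strongly_resolves (GV n) (GE n) w ?u ?v"
      using S uV vV unfolding strong_resolving_set_def by blast
    have d1: "diffn n j (inc n j) = 1" using diffn_inc[OF j j] diffn_self n2 unfolding inc_def by simp
    have d2: "diffn n (inc n j) j = n - 1" unfolding diffn_def inc_def using j by auto
    have g1: "gdist (GV n) (GE n) ?u ?v = 2*k"
      using gdist_G(1)[OF n k a j a ij] d1 diffn_self Dn01[OF n k] by simp
    have g2: "gdist (GV n) (GE n) ?v ?u = 2*k"
      using gdist_G(1)[OF n k a ij a j] d2 diffn_self Dn01[OF n k] by simp
    have bu: "\<forall>w\<in>GV n. gdist (GV n) (GE n) ?u w \<le> 2*k" using gdist_G_le[OF n k] uV by blast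
    have bv: "\<forall>w\<in>GV n. gdist (GV n) (GE n) ?v w \<le> 2*k" using gdist_G_le[OF n k] vV by blast
    from w(2) have "?v \<in> interval (GV n) (GE n) ?u w \<or> ?u \<in> interval (GV n) (GE n) ?v w"
      unfolding strongly_resolves_def .
    then have "w = ?v \<or> w = ?u"
    proof
      assume "?v \<in> interval (GV n) (GE n) ?u w"
      have "?v = w" by (rule far_lemma[OF \<open>?v \<in> interval (GV n) (GE n) ?u w\<close> bu]) (simp add: g1)
      then show ?thesis by simp
    next
      assume "?u \<in> interval (GV n) (GE n) ?v w"
      have "?u = w" by (rule far_lemma[OF \<open>?u \<in> interval (GV n) (GE n) ?v w\<close> bv]) (simp add: g2)
      then show ?thesis by simp
    qed
    then show ?thesis using w(1) by auto
  qed
  define T where "T a = {j. (a, j) \<in> S}" for a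
  have TS: "S = Sigma {..<n} T"
    using SV unfolding T_def by (auto simp: GV_iff)
  have Tsub: "T a \<subseteq> {..<n}" if "a < n" for a
    using SV unfolding T_def by (auto simp: GV_iff)
  have Tc: "k + 1 \<le> card (T a)" if a: "a < n" for a
    using cover_count[OF n Tsub[OF a]] cov a unfolding T_def by auto
  have "card S = (\<Sum>a\<in>{..<n}. card (T a))"
    unfolding TS by (rule card_SigmaI) (auto intro: finite_subset[OF Tsub])
  also have "\<dots> \<ge> (\<Sum>a\<in>{..<n}. k + 1)" by (rule sum_mono) (use Tc in auto)
  finally show ?thesis by simp
qed

section \<open>Upper bound\<close>

definition unitp :: "nat \<Rightarrow> nat \<Rightarrow> nat \<Rightarrow> bool" where
  "unitp n r1 r2 \<longleftrightarrow> (r1 = 0 \<and> (r2 = 1 \<or> r2 = n - 1)) \<or> (r2 = 0 \<and> (r1 = 1 \<or> r1 = n - 1))"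

lemma dl0: "r < n \<Longrightarrow> dl n r = 0 \<longleftrightarrow> r = 0" unfolding dl_def by auto
lemma dl1: "n = 2*k+1 \<Longrightarrow> 0 < k \<Longrightarrow> r < n \<Longrightarrow> dl n r = 1 \<longleftrightarrow> r = 1 \<or> r = n - 1"
  unfolding dl_def by auto

lemma locmaxR:
  assumes n: "n = 2*k+1" and k: "0 < k" and r: "r1 < n" "r2 < n" and nu: "\<not> unitp n r1 r2"
  shows "\<exists>x\<in>{inc n r1, dec n r1}. \<exists>z\<in>{inc n r2, dec n r2}. Dn n r1 r2 < Dn n x z"
proof -
  have nuD: "\<not> ((dl n r1 = 0 \<and> dl n r2 = 1) \<or> (dl n r2 = 0 \<and> dl n r1 = 1))"
    using nu dl0[OF r(1)] dl0[OF r(2)] dl1[OF n k r(1)] dl1[OF n k r(2)] unfolding unitp_def by auto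
  obtain xu where xu: "xu \<in> {inc n r1, dec n r1}" "dl n xu = upd k (dl n r1)"
    using up_ex[OF n k r(1)] unfolding upd_def by blast
  obtain xd where xd: "xd \<in> {inc n r1, dec n r1}" "dl n xd = dnd (dl n r1)"
    using down_ex[OF n k r(1)] unfolding dnd_def by blast
  obtain zu where zu: "zu \<in> {inc n r2, dec n r2}" "dl n zu = upd k (dl n r2)"
    using up_ex[OF n k r(2)] unfolding upd_def by blast
  obtain zd where zd: "zd \<in> {inc n r2, dec n r2}" "dl n zd = dnd (dl n r2)"
    using down_ex[OF n k r(2)] unfolding dnd_def by blast
  from locmaxD[OF n k dl_le[OF n] dl_le[OF n] nuD]
  show ?thesis
  proof (elim disjE)
    assume "DD n (dl n r1) (dl n r2) < DD n (upd k (dl n r1)) (upd k (dl n r2))"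
    then have "Dn n r1 r2 < Dn n xu zu" unfolding Dn_DD xu(2) zu(2) .
    then show ?thesis using xu(1) zu(1) by blast
  next
    assume "DD n (dl n r1) (dl n r2) < DD n (upd k (dl n r1)) (dnd (dl n r2))"
    then have "Dn n r1 r2 < Dn n xu zd" unfolding Dn_DD xu(2) zd(2) .
    then show ?thesis using xu(1) zd(1) by blast
  next
    assume "DD n (dl n r1) (dl n r2) < DD n (dnd (dl n r1)) (upd k (dl n r2))"
    then have "Dn n r1 r2 < Dn n xd zu" unfolding Dn_DD xd(2) zu(2) .
    then show ?thesis using xd(1) zu(1) by blast
  next
    assume "DD n (dl n r1) (dl n r2) < DD n (dnd (dl n r1)) (dnd (dl n r2))"
    then have "Dn n r1 r2 < Dn n xd zd" unfolding Dn_DD xd(2) zd(2) .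
    then show ?thesis using xd(1) zd(1) by blast
  qed
qed

lemma even_inc: "n = 2*k+1 \<Longrightarrow> r < n \<Longrightarrow> even r \<or> even (inc n r)"
  unfolding inc_def by auto
lemma even_dec: "n = 2*k+1 \<Longrightarrow> r < n \<Longrightarrow> even r \<or> even (dec n r)"
  unfolding dec_def by (cases r) auto

lemma unit_cover:
  assumes n: "n = 2*k+1" and k: "0 < k" and lt: "a < n" "b < n" "c < n" "d < n"
    and u: "unitp n (diffn n a c) (diffn n b d)"
  shows "even (diffn n a b) \<or> even (diffn n c d)"
proof -
  have n2: "2 \<le> n" using n k by simp
  have r: "diffn n a b < n" using diffn_lt lt by auto
  have i1: "diffn n x (inc n x) = 1" if "x < n" for x
    using diffn_inc[OF that that] diffn_self n2 unfolding inc_def by simp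
  have d1: "diffn n x (dec n x) = n - 1" if "x < n" for x
    using diffn_dec[OF that that] diffn_self unfolding dec_def by simp
  from u consider "diffn n a c = 0" "diffn n b d = 1" | "diffn n a c = 0" "diffn n b d = n - 1"
    | "diffn n b d = 0" "diffn n a c = 1" | "diffn n b d = 0" "diffn n a c = n - 1"
    unfolding unitp_def by auto
  then show ?thesis
  proof cases
    case 1
    then have "c = a" using diffn_0 lt by auto
    moreover have "d = inc n b" using diffn_inj[OF lt(2) lt(4) inc_lt[OF lt(2)]] 1 i1[OF lt(2)] by simp
    ultimately show ?thesis using diffn_inc[OF lt(1) lt(2)] even_inc[OF n r] by simp
  next
    case 2
    then have "c = a" using diffn_0 lt by auto
    moreover have "d = dec n b" using diffn_inj[OF lt(2) lt(4) dec_lt[OF lt(2)]] 2 d1[OF lt(2)] by simp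
    ultimately show ?thesis using diffn_dec[OF lt(1) lt(2)] even_dec[OF n r] by simp
  next
    case 3
    then have "d = b" using diffn_0 lt by auto
    moreover have "c = inc n a" using diffn_inj[OF lt(1) lt(3) inc_lt[OF lt(1)]] 3 i1[OF lt(1)] by simp
    ultimately show ?thesis using diffn_inc1[OF lt(1) lt(2)] even_dec[OF n r] by simp
  next
    case 4
    then have "d = b" using diffn_0 lt by auto
    moreover have "c = dec n a" using diffn_inj[OF lt(1) lt(3) dec_lt[OF lt(1)]] 4 d1[OF lt(1)] by simp
    ultimately show ?thesis using diffn_dec1[OF lt(1) lt(2)] even_inc[OF n r] by simp
  qed
qed

definition S0 :: "nat \<Rightarrow> (nat \<times> nat) set" where
  "S0 n = {(a, b). a < n \<and> b < n \<and> even (diffn n a b)}"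

lemma card_evens: "card {r. r < 2*k+1 \<and> even (r::nat)} = k + 1"
proof -
  have "{r. r < 2*k+1 \<and> even (r::nat)} = (\<lambda>i. 2*i) ` {..k}"
    by (auto elim!: evenE)
  moreover have "inj_on (\<lambda>i::nat. 2*i) {..k}" by (auto simp: inj_on_def)
  ultimately show ?thesis by (simp add: card_image)
qed

lemma card_row:
  assumes n: "n = 2*k+1" and a: "a < n"
  shows "card {b. b < n \<and> even (diffn n a b)} = k + 1"
proof -
  have "diffn n a ` {b. b < n \<and> even (diffn n a b)} = {r. r < n \<and> even r}"
  proof
    show "diffn n a ` {b. b < n \<and> even (diffn n a b)} \<subseteq> {r. r < n \<and> even r}"
      using diffn_lt a by auto
  next
    show "{r. r < n \<and> even r} \<subseteq> diffn n a ` {b. b < n \<and> even (diffn n a b)}"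
    proof
      fix r assume r: "r \<in> {r. r < n \<and> even r}"
      let ?b = "if a + r < n then a + r else a + r - n"
      have "?b < n" using a r by auto
      moreover have "diffn n a ?b = r" using diffn_surj a r by auto
      ultimately show "r \<in> diffn n a ` {b. b < n \<and> even (diffn n a b)}"
        using r by (auto intro!: image_eqI[of _ _ ?b])
    qed
  qed
  moreover have "inj_on (diffn n a) {b. b < n \<and> even (diffn n a b)}"
    using diffn_inj a by (auto simp: inj_on_def)
  ultimately have "card {b. b < n \<and> even (diffn n a b)} = card {r. r < n \<and> even r}"
    by (metis card_image)
  then show ?thesis using card_evens n by simp
qed

lemma card_S0:
  assumes n: "n = 2*k+1"
  shows "card (S0 n) = n * (k + 1)"
proof -
  have "S0 n = Sigma {..<n} (\<lambda>a. {b. b < n \<and> even (diffn n a b)})"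
    unfolding S0_def by auto
  then have "card (S0 n) = (\<Sum>a\<in>{..<n}. card {b. b < n \<and> even (diffn n a b)})"
    by (simp add: card_SigmaI)
  also have "\<dots> = (\<Sum>a\<in>{..<n}. k + 1)" using card_row[OF n] by simp
  finally show ?thesis by simp
qed

lemma upper:
  assumes n: "n = 2*k+1" and k: "0 < k"
  shows "strong_resolving_set (GV n) (GE n) (S0 n)"
  unfolding strong_resolving_set_def
proof (intro conjI ballI impI)
  show "S0 n \<subseteq> GV n" unfolding S0_def by (auto simp: GV_iff)
next
  let ?G = "gdist (GV n) (GE n)"
  fix u v assume uV: "u \<in> GV n" and vV: "v \<in> GV n" and uv: "u \<noteq> v"
  show "\<exists>w\<in>S0 n. strongly_resolves (GV n) (GE n) w u v"
  proof (cases "u \<in> S0 n")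
    case True
    obtain p where p: "is_walk (GV n) (GE n) p (?G v u) v u"
      using gdist_G_walk[OF n k vV uV] unfolding walkable_def by auto
    then have "u \<in> interval (GV n) (GE n) v u"
      unfolding interval_def is_walk_def by auto
    then show ?thesis using True unfolding strongly_resolves_def by blast
  next
    case False
    define Y where "Y = {y \<in> GV n. ?G u y = ?G u v + ?G v y}"
    have finY: "finite Y" unfolding Y_def using GV_finite by auto
    have "?G v v \<le> 0" by (rule gdist_le_walkable) (simp add: walkable_0 vV)
    then have "v \<in> Y" unfolding Y_def using vV by simp
    define M where "M = Max (?G u ` Y)"
    have "M \<in> ?G u ` Y" unfolding M_def using finY \<open>v \<in> Y\<close> by (intro Max_in) auto
    then obtain y where yY: "y \<in> Y" and yM: "?G u y = M" by auto
    have ymax: "?G u y' \<le> ?G u y" if "y' \<in> Y" for y'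
      unfolding yM M_def using finY that by (intro Max_ge) auto
    have yV: "y \<in> GV n" using yY unfolding Y_def by auto
    obtain a b where u: "u = (a, b)" by (cases u)
    obtain c d where y: "y = (c, d)" by (cases y)
    have lt: "a < n" "b < n" "c < n" "d < n" using uV yV u y GV_iff by auto
    have unit: "unitp n (diffn n a c) (diffn n b d)"
    proof (rule ccontr)
      assume nu: "\<not> unitp n (diffn n a c) (diffn n b d)"
      from locmaxR[OF n k diffn_lt[OF lt(1,3)] diffn_lt[OF lt(2,4)] nu]
      obtain x z where x: "x \<in> {inc n (diffn n a c), dec n (diffn n a c)}"
        and z: "z \<in> {inc n (diffn n b d), dec n (diffn n b d)}"
        and lt2: "Dn n (diffn n a c) (diffn n b d) < Dn n x z" by blast
      obtain c' where c': "c' \<in> {inc n c, dec n c}" "diffn n a c' = x"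
        using x diffn_inc[OF lt(1,3)] diffn_dec[OF lt(1,3)] by auto
      obtain d' where d': "d' \<in> {inc n d, dec n d}" "diffn n b d' = z"
        using z diffn_inc[OF lt(2,4)] diffn_dec[OF lt(2,4)] by auto
      have c'lt: "c' < n" using c' inc_lt dec_lt lt by auto
      have d'lt: "d' < n" using d' inc_lt dec_lt lt by auto
      let ?y' = "(c', d')"
      have y'V: "?y' \<in> GV n" using c'lt d'lt GV_iff by auto
      have ec: "cycle_E n c c'" using c' lt c'lt inc_dec unfolding cycle_E_iff by auto
      have ed: "cycle_E n d d'" using d' lt d'lt inc_dec unfolding cycle_E_iff by auto
      have edge: "GE n y ?y'" using ec ed y unfolding dprod_E_def by simp
      have gt: "?G u y < ?G u ?y'"
        using lt2 gdist_G(1)[OF n k lt(1,2) lt(3,4)] gdist_G(1)[OF n k lt(1,2) c'lt d'lt] c'(2) d'(2) u y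
        by simp
      have "walkable (GV n) (GE n) (Suc (?G v y)) v ?y'"
        unfolding walkable_Suc using gdist_G_walk[OF n k vV yV] edge y'V by blast
      then have vy': "?G v ?y' \<le> ?G v y + 1" using gdist_le_walkable by fastforce
      have "walkable (GV n) (GE n) (?G u v + ?G v ?y') u ?y'"
        by (rule walkable_concat[OF gdist_G_walk[OF n k uV vV] gdist_G_walk[OF n k vV y'V]])
      then have uy': "?G u ?y' \<le> ?G u v + ?G v ?y'" by (rule gdist_le_walkable)
      have "?G u y = ?G u v + ?G v y" using yY unfolding Y_def by simp
      then have "?G u ?y' = ?G u v + ?G v ?y'" using gt vy' uy' by linarith
      then have "?y' \<in> Y" unfolding Y_def using y'V by simp
      then show False using ymax gt by fastforce
    qed
    have "\<not> even (diffn n a b)" using False u lt unfolding S0_def by auto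
    then have "even (diffn n c d)" using unit_cover[OF n k lt unit] by simp
    then have yS: "y \<in> S0 n" using y lt unfolding S0_def by auto
    obtain p where p: "is_walk (GV n) (GE n) p (?G u v) u v"
      using gdist_G_walk[OF n k uV vV] unfolding walkable_def by auto
    obtain q where q: "is_walk (GV n) (GE n) q (?G v y) v y"
      using gdist_G_walk[OF n k vV yV] unfolding walkable_def by auto
    have eq: "?G u y = ?G u v + ?G v y" using yY unfolding Y_def by simp
    have "is_walk (GV n) (GE n) (\<lambda>i. if i \<le> ?G u v then p i else q (i - ?G u v)) (?G u y) u y"
      unfolding eq by (rule walk_concat[OF p q])
    moreover have "(\<lambda>i. if i \<le> ?G u v then p i else q (i - ?G u v)) (?G u v) = v"
      using p unfolding is_walk_def by simp
    moreover have "?G u v \<le> ?G u y" using eq by simp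
    ultimately have "v \<in> interval (GV n) (GE n) u y" unfolding interval_def by blast
    then show ?thesis using yS unfolding strongly_resolves_def by blast
  qed
qed

theorem proposition31:
  fixes k :: nat
  assumes "k > 0"
  shows "strong_metric_dim (dprod_V (cycle_V (2*k+1)) (cycle_V (2*k+1)))
                           (dprod_E (cycle_E (2*k+1)) (cycle_E (2*k+1)))
         = (2*k+1)*(k+1)"
  unfolding strong_metric_dim_def
proof (rule Least_equality)
  show "\<exists>S. strong_resolving_set (GV (2*k+1)) (GE (2*k+1)) S \<and> card S = (2*k+1)*(k+1)"
    using upper[OF refl assms] card_S0[OF refl] by blast
next
  fix m assume "\<exists>S. strong_resolving_set (GV (2*k+1)) (GE (2*k+1)) S \<and> card S = m"
  then show "(2*k+1)*(k+1) \<le> m" using lower_bound[OF refl assms] by blast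
qed

end
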